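(* Let $\mathcal F$ be a saturated fusion system on a finite $p$-group $S$, and let $Q\trianglelefteq P\le S$ with $P$ fully $\mathcal F$-normalized and $C_S(\xi(Q))\le P$ for all $\xi\in\operatorname{Aut}_\mathcal F(P)$. Then $Q$ is fully $\mathcal F$-centralized.
   Context: Fusion systems: Let $S$ be a finite $p$-group. A fusion system $\mathcal F$ on $S$ is a category whose objects are the subgroups of $S$ and whose morphism sets $\operatorname{Hom}_\mathcal F(P,Q)$ are sets of injective group homomorphisms $P\to Q$, such that (i) every conjugation map $x\mapsto gxg^{-1}$, $g\in S$, from $P$ to $Q$ lies in $\operatorname{Hom}_\mathcal F(P,Q)$, and (ii) every $\varphi\in\operatorname{Hom}_\mathcal F(P,Q)$ factors as an isomorphism $P\to\varphi(P)$ in $\mathcal F$ with inverse in $\mathcal F$ followed by inclusion. $Q$ is fully $\mathcal F$-normalized (resp. centralized) if $|N_S(Q)|$ (resp. $|C_S(Q)|$) is maximal among $\mathcal F$-conjugates of $Q$. For $\varphi\in\operatorname{Hom}_\mathcal F(Q,S)$, $N_\varphi=\{g\in N_S(Q):\varphi c_g|_Q\varphi^{-1}\in\operatorname{Aut}_S(\varphi(Q))\}$, $\operatorname{Aut}_S(\cdot)$ denoting automorphisms induced by conjugation by elements of $S$. $\mathcal F$ is saturated if every fully normalized $Q$ is fully centralized with $\operatorname{Aut}_S(Q)$ a Sylow $p$-subgroup of $\operatorname{Aut}_\mathcal F(Q)$, and every $\varphi\in\operatorname{Hom}_\mathcal F(Q,S)$ with $\varphi(Q)$ fully centralized extends to a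 morphism of $\mathcal F$ defined on $N_\varphi$. *)

theory Defs
  imports "HOL-Algebra.Algebra" "HOL-Computational_Algebra.Primes"
begin

text \<open>A fusion system on the finite p-group G (= S) is given by a function
  F with F P Q = Hom_F(P,Q), a set of maps P -> Q.  Maps are HOL functions
  made canonical by requiring them to be extensional (undefined outside P).\<close>

definition centralizer :: "('a, 'b) monoid_scheme \<Rightarrow> 'a set \<Rightarrow> 'a set" where
  "centralizer G H = {g \<in> carrier G. \<forall>h \<in> H. g \<otimes>\<^bsub>G\<^esub> h = h \<otimes>\<^bsub>G\<^esub> g}"

definition conjmap :: "('a, 'b) monoid_scheme \<Rightarrow> 'a \<Rightarrow> 'a set \<Rightarrow> 'a \<Rightarrow> 'a" where
  "conjmap G g P = (\<lambda>x \<in> P. g \<otimes>\<^bsub>G\<^esub> x \<otimes>\<^bsub>G\<^esub> inv\<^bsub>G\<^esub> g)"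

definition inj_homs :: "('a, 'b) monoid_scheme \<Rightarrow> 'a set \<Rightarrow> 'a set \<Rightarrow> ('a \<Rightarrow> 'a) set" where
  "inj_homs G P Q = {\<phi>. \<phi> \<in> extensional P \<and> \<phi> ` P \<subseteq> Q \<and> inj_on \<phi> P \<and>
      (\<forall>x \<in> P. \<forall>y \<in> P. \<phi> (x \<otimes>\<^bsub>G\<^esub> y) = \<phi> x \<otimes>\<^bsub>G\<^esub> \<phi> y)}"

definition finite_p_group :: "nat \<Rightarrow> ('a, 'b) monoid_scheme \<Rightarrow> bool" where
  "finite_p_group p G \<longleftrightarrow> group G \<and> Factorial_Ring.prime p \<and> finite (carrier G) \<and>
      (\<exists>n. card (carrier G) = p ^ n)"

definition fusion_system ::
  "nat \<Rightarrow> ('a, 'b) monoid_scheme \<Rightarrow> ('a set \<Rightarrow> 'a set \<Rightarrow> ('a \<Rightarrow> 'a) set) \<Rightarrow> bool" where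
  "fusion_system p G F \<longleftrightarrow> finite_p_group p G \<and>
     \<comment> \<open>objects are the subgroups; morphisms are injective homomorphisms\<close>
     (\<forall>P Q. F P Q \<noteq> {} \<longrightarrow> subgroup P G \<and> subgroup Q G) \<and>
     (\<forall>P Q. F P Q \<subseteq> inj_homs G P Q) \<and>
     \<comment> \<open>category: closed under composition\<close>
     (\<forall>P Q R \<phi> \<psi>. \<phi> \<in> F P Q \<longrightarrow> \<psi> \<in> F Q R \<longrightarrow> (\<lambda>x \<in> P. \<psi> (\<phi> x)) \<in> F P R) \<and>
     \<comment> \<open>(i) conjugation maps by elements of S\<close>
     (\<forall>P Q g. subgroup P G \<longrightarrow> subgroup Q G \<longrightarrow> g \<in> carrier G \<longrightarrow>
        conjmap G g P ` P \<subseteq> Q \<longrightarrow> conjmap G g P \<in> F P Q) \<and>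
     \<comment> \<open>(ii) factorisation: isomorphism onto the image with inverse in F, then inclusion\<close>
     (\<forall>P Q \<phi>. \<phi> \<in> F P Q \<longrightarrow>
        \<phi> \<in> F P (\<phi> ` P) \<and> (\<lambda>y \<in> \<phi> ` P. the_inv_into P \<phi> y) \<in> F (\<phi> ` P) P)"

definition AutF :: "('a set \<Rightarrow> 'a set \<Rightarrow> ('a \<Rightarrow> 'a) set) \<Rightarrow> 'a set \<Rightarrow> ('a \<Rightarrow> 'a) set" where
  "AutF F P = F P P"

definition AutS :: "('a, 'b) monoid_scheme \<Rightarrow> 'a set \<Rightarrow> ('a \<Rightarrow> 'a) set" where
  "AutS G P = (\<lambda>g. conjmap G g P) ` normalizer G P"

definition F_conjugates :: "('a, 'b) monoid_scheme \<Rightarrow> ('a set \<Rightarrow> 'a set \<Rightarrow> ('a \<Rightarrow> 'a) set) \<Rightarrow> 'a set \<Rightarrow> 'a set set" where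
  "F_conjugates G F Q = {\<phi> ` Q | \<phi>. \<phi> \<in> F Q (carrier G)}"

definition fully_normalized where
  "fully_normalized G F Q \<longleftrightarrow> subgroup Q G \<and>
     (\<forall>R \<in> F_conjugates G F Q. card (normalizer G R) \<le> card (normalizer G Q))"

definition fully_centralized where
  "fully_centralized G F Q \<longleftrightarrow> subgroup Q G \<and>
     (\<forall>R \<in> F_conjugates G F Q. card (centralizer G R) \<le> card (centralizer G Q))"

text \<open>Sylow p-subgroup H of a finite group K (H already known to be a subgroup):
  H \<subseteq> K and |H| is the full p-part of |K|.\<close>
definition sylow_in :: "nat \<Rightarrow> 'c set \<Rightarrow> 'c set \<Rightarrow> bool" where
  "sylow_in p H K \<longleftrightarrow> H \<subseteq> K \<and> card H = p ^ multiplicity p (card K)"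

definition N_phi :: "('a, 'b) monoid_scheme \<Rightarrow> 'a set \<Rightarrow> ('a \<Rightarrow> 'a) \<Rightarrow> 'a set" where
  "N_phi G Q \<phi> = {g \<in> normalizer G Q. \<exists>h \<in> normalizer G (\<phi> ` Q).
      \<forall>y \<in> Q. \<phi> (g \<otimes>\<^bsub>G\<^esub> y \<otimes>\<^bsub>G\<^esub> inv\<^bsub>G\<^esub> g) = h \<otimes>\<^bsub>G\<^esub> \<phi> y \<otimes>\<^bsub>G\<^esub> inv\<^bsub>G\<^esub> h}"

definition saturated ::
  "nat \<Rightarrow> ('a, 'b) monoid_scheme \<Rightarrow> ('a set \<Rightarrow> 'a set \<Rightarrow> ('a \<Rightarrow> 'a) set) \<Rightarrow> bool" where
  "saturated p G F \<longleftrightarrow> fusion_system p G F \<and>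
     (\<forall>Q. fully_normalized G F Q \<longrightarrow>
        fully_centralized G F Q \<and> sylow_in p (AutS G Q) (AutF F Q)) \<and>
     (\<forall>Q \<phi>. subgroup Q G \<longrightarrow> \<phi> \<in> F Q (carrier G) \<longrightarrow> fully_centralized G F (\<phi> ` Q) \<longrightarrow>
        (\<exists>\<psi> \<in> F (N_phi G Q \<phi>) (carrier G). \<forall>x \<in> Q. \<psi> x = \<phi> x))"

end

theory Submission
  imports Defs
begin

definition is_action :: "('l, 'm) monoid_scheme \<Rightarrow> 'x set \<Rightarrow> ('l \<Rightarrow> 'x \<Rightarrow> 'x) \<Rightarrow> bool" where
  "is_action H E f \<longleftrightarrow> (\<forall>g\<in>carrier H. \<forall>x\<in>E. f g x \<in> E) \<and> (\<forall>x\<in>E. f \<one>\<^bsub>H\<^esub> x = x) \<and>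
     (\<forall>g\<in>carrier H. \<forall>h\<in>carrier H. \<forall>x\<in>E. f (g \<otimes>\<^bsub>H\<^esub> h) x = f g (f h x))"

lemma is_action_group_action:
  assumes H: "group H" and a: "is_action H E f"
  shows "group_action H E (\<lambda>g. restrict (f g) E)"
proof -
  interpret H: group H by fact
  have cl: "\<And>g x. g \<in> carrier H \<Longrightarrow> x \<in> E \<Longrightarrow> f g x \<in> E"
   and one: "\<And>x. x \<in> E \<Longrightarrow> f \<one>\<^bsub>H\<^esub> x = x"
   and comp: "\<And>g h x. g \<in> carrier H \<Longrightarrow> h \<in> carrier H \<Longrightarrow> x \<in> E \<Longrightarrow> f (g \<otimes>\<^bsub>H\<^esub> h) x = f g (f h x)"
    using a unfolding is_action_def by auto
  have bij: "restrict (f g) E \<in> Bij E" if g: "g \<in> carrier H" for g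
  proof -
    have inv1: "f (inv\<^bsub>H\<^esub> g) (f g x) = x" if "x \<in> E" for x
      using comp[of "inv\<^bsub>H\<^esub> g" g x] one[of x] g that by simp
    have inv2: "f g (f (inv\<^bsub>H\<^esub> g) x) = x" if "x \<in> E" for x
      using comp[of g "inv\<^bsub>H\<^esub> g" x] one[of x] g that by simp
    have "bij_betw (f g) E E"
      apply (rule bij_betw_byWitness[where f'="f (inv\<^bsub>H\<^esub> g)"])
      using inv1 inv2 cl g by auto
    hence "bij_betw (restrict (f g) E) E E"
      by (metis bij_betw_cong restrict_apply')
    thus ?thesis unfolding Bij_def by auto
  qed
  show ?thesis
    unfolding group_action_def group_hom_def group_hom_axioms_def
  proof (intro conjI)
    show "group H" by fact
    show "group (BijGroup E)" by (rule group_BijGroup)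
    show "(\<lambda>g. restrict (f g) E) \<in> hom H (BijGroup E)"
      unfolding hom_def
    proof (intro CollectI conjI ballI)
      show "(\<lambda>g. restrict (f g) E) \<in> carrier H \<rightarrow> carrier (BijGroup E)"
        using bij by (auto simp: BijGroup_def)
      fix x y assume xy: "x \<in> carrier H" "y \<in> carrier H"
      show "restrict (f (x \<otimes>\<^bsub>H\<^esub> y)) E = restrict (f x) E \<otimes>\<^bsub>BijGroup E\<^esub> restrict (f y) E"
        using bij[OF xy(1)] bij[OF xy(2)] xy
        by (auto simp: BijGroup_def compose_def comp cl fun_eq_iff)
    qed
  qed
qed

definition porbit where "porbit H f x = {f g x | g. g \<in> carrier H}"

lemma orbit_card_dvd:
  assumes H: "group H" and a: "is_action H E f" and x: "x \<in> E"
  shows "card (porbit H f x) dvd order H"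
proof -
  interpret ga: group_action H E "\<lambda>g. restrict (f g) E" using is_action_group_action[OF H a] .
  have "orbit H (\<lambda>g. restrict (f g) E) x = porbit H f x"
    using x by (auto simp: orbit_def porbit_def)
  thus ?thesis using ga.orbit_stabilizer_theorem[OF x] by (metis dvd_triv_left)
qed

lemma porbit_sub: "is_action H E f \<Longrightarrow> x \<in> E \<Longrightarrow> porbit H f x \<subseteq> E"
  by (auto simp: porbit_def is_action_def)

lemma pgroup_sub_card:
  assumes "group H" "finite (carrier H)" "card (carrier H) = p ^ n" "Factorial_Ring.prime p"
    "d dvd order H"
  shows "\<exists>i. d = p ^ i"
  using assms divides_primepow_nat by (auto simp: order_def)

lemma p_dvd_card_nofix:
  assumes H: "group H" and fin: "finite (carrier H)" and cH: "card (carrier H) = p ^ n"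
    and p: "Factorial_Ring.prime p" and a: "is_action H E f" and E: "finite E"
    and nf: "\<And>x. x \<in> E \<Longrightarrow> \<exists>g\<in>carrier H. f g x \<noteq> x"
  shows "p dvd card E"
proof -
  interpret ga: group_action H E "\<lambda>g. restrict (f g) E" using is_action_group_action[OF H a] .
  have ce0: "(\<Sum>orb\<in>orbits H E (\<lambda>g. restrict (f g) E). \<Sum>x\<in>orb. (1::nat)) = (\<Sum>x\<in>E. 1)"
    by (rule ga.disjoint_sum[OF E])
  have ce: "card E = (\<Sum>orb\<in>orbits H E (\<lambda>g. restrict (f g) E). card orb)"
    using ce0 by (simp only: card_eq_sum[symmetric])
  have "p dvd card orb" if orbin: "orb \<in> orbits H E (\<lambda>g. restrict (f g) E)" for orb
  proof -
    obtain x where x: "x \<in> E" and ox: "orb = orbit H (\<lambda>g. restrict (f g) E) x"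
      using orbin unfolding orbits_def by blast
    have oeq: "orb = porbit H f x" using x ox by (auto simp: orbit_def porbit_def)
    have "card orb dvd order H" using orbit_card_dvd[OF H a x] oeq by simp
    then obtain i where i: "card orb = p ^ i" using pgroup_sub_card[OF H fin cH p] by blast
    obtain g where g: "g \<in> carrier H" "f g x \<noteq> x" using nf[OF x] by blast
    have "x \<in> orb" unfolding oeq porbit_def
      using a x H unfolding is_action_def by (auto intro!: exI[of _ "\<one>\<^bsub>H\<^esub>"] group.is_monoid monoid.one_closed)
    moreover have "f g x \<in> orb" unfolding oeq porbit_def using g by auto
    moreover have "finite orb" using porbit_sub[OF a x] E oeq finite_subset by metis
    ultimately have "card {x, f g x} \<le> card orb"
      by (intro card_mono) auto
    hence "card orb \<ge> 2" using g(2) by simp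
    hence "i \<noteq> 0" using i by (cases i) auto
    thus ?thesis using i by (simp add: dvd_power)
  qed
  thus ?thesis using ce by (simp add: dvd_sum)
qed

lemma fix_mod:
  assumes H: "group H" and fin: "finite (carrier H)" and cH: "card (carrier H) = p ^ n"
    and p: "Factorial_Ring.prime p" and a: "is_action H E f" and E: "finite E"
  shows "card E mod p = card {x\<in>E. \<forall>g\<in>carrier H. f g x = x} mod p"
proof -
  define Fx where "Fx = {x\<in>E. \<forall>g\<in>carrier H. f g x = x}"
  interpret H: group H by fact
  have cl: "\<And>g x. g \<in> carrier H \<Longrightarrow> x \<in> E \<Longrightarrow> f g x \<in> E"
   and one: "\<And>x. x \<in> E \<Longrightarrow> f \<one>\<^bsub>H\<^esub> x = x"
   and comp: "\<And>g h x. g \<in> carrier H \<Longrightarrow> h \<in> carrier H \<Longrightarrow> x \<in> E \<Longrightarrow> f (g \<otimes>\<^bsub>H\<^esub> h) x = f g (f h x)"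
    using a unfolding is_action_def by auto
  have a2: "is_action H (E - Fx) f"
    unfolding is_action_def
  proof (intro conjI ballI)
    fix g x assume g: "g \<in> carrier H" and x: "x \<in> E - Fx"
    show "f g x \<in> E - Fx"
    proof
      show "f g x \<in> E" using cl g x by auto
      show "f g x \<notin> Fx"
      proof
        assume "f g x \<in> Fx"
        hence "f (inv\<^bsub>H\<^esub> g) (f g x) = f g x" unfolding Fx_def using g by auto
        moreover have "f (inv\<^bsub>H\<^esub> g) (f g x) = x" using comp[of "inv\<^bsub>H\<^esub> g" g x] one g x by simp
        ultimately have "x = f g x" by simp
        hence "x \<in> Fx" using \<open>f g x \<in> Fx\<close> by simp
        thus False using x by simp
      qed
    qed
  qed (use a in \<open>auto simp: is_action_def\<close>)
  have "p dvd card (E - Fx)"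
    by (rule p_dvd_card_nofix[OF H fin cH p a2]) (use E in \<open>auto simp: Fx_def\<close>)
  then obtain k where k: "card (E - Fx) = p * k" by blast
  have sub: "Fx \<subseteq> E" unfolding Fx_def by auto
  have "card E = card (E - Fx) + card Fx"
    using card_Diff_subset[OF finite_subset[OF sub E] sub] card_mono[OF E sub] by simp
  hence "card E = p * k + card Fx" using k by simp
  thus ?thesis unfolding Fx_def by simp
qed

lemma (in group) conj_coset_eq: "g <# H #> inv g = (\<lambda>h. g \<otimes> h \<otimes> inv g) ` H"
  by (auto simp: l_coset_def r_coset_def)

lemma (in group) normalizer_iff:
  assumes "H \<subseteq> carrier G"
  shows "g \<in> normalizer G H \<longleftrightarrow> g \<in> carrier G \<and> (\<lambda>h. g \<otimes> h \<otimes> inv g) ` H = H"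
  using assms by (auto simp: normalizer_def stabilizer_def conj_coset_eq)

lemma (in group) normalizer_conj:
  assumes "H \<subseteq> carrier G" "g \<in> normalizer G H" "h \<in> H"
  shows "g \<otimes> h \<otimes> inv g \<in> H"
  using assms normalizer_iff by blast

lemma (in group) normalizer_carrier:
  assumes "H \<subseteq> carrier G" "g \<in> normalizer G H"
  shows "g \<in> carrier G"
  using assms normalizer_iff by blast

lemma (in group) normalizer_conj_inv:
  assumes "H \<subseteq> carrier G" "g \<in> normalizer G H" "h \<in> H"
  shows "inv g \<otimes> h \<otimes> g \<in> H"
proof -
  have "inv g \<in> normalizer G H"
    using normalizer_imp_subgroup[OF assms(1)] assms(2) subgroup.m_inv_closed by fastforce
  from normalizer_conj[OF assms(1) this assms(3)] show ?thesis
    using normalizer_carrier[OF assms(1,2)] by simp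
qed

lemma (in group) normalizer_intro:
  assumes "finite H" "H \<subseteq> carrier G" "g \<in> carrier G" "\<And>h. h \<in> H \<Longrightarrow> g \<otimes> h \<otimes> inv g \<in> H"
  shows "g \<in> normalizer G H"
proof -
  have inj: "inj_on (\<lambda>h. g \<otimes> h \<otimes> inv g) H"
    using assms(2,3) by (auto simp: inj_on_def subset_iff)
  have sub: "(\<lambda>h. g \<otimes> h \<otimes> inv g) ` H \<subseteq> H" using assms(4) by auto
  have "card ((\<lambda>h. g \<otimes> h \<otimes> inv g) ` H) = card H" using card_image[OF inj] .
  hence "(\<lambda>h. g \<otimes> h \<otimes> inv g) ` H = H" using card_subset_eq[OF assms(1) sub] by simp
  thus ?thesis using normalizer_iff assms by blast
qed

lemma (in group) subgroup_in_normalizer: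
  assumes "subgroup H G" "h \<in> H"
  shows "h \<in> normalizer G H"
proof -
  have "(\<lambda>x. h \<otimes> x \<otimes> inv h) ` H = H"
  proof
    show "(\<lambda>x. h \<otimes> x \<otimes> inv h) ` H \<subseteq> H"
      using assms by (auto intro!: subgroup.m_closed subgroup.m_inv_closed)
    show "H \<subseteq> (\<lambda>x. h \<otimes> x \<otimes> inv h) ` H"
    proof
      fix x assume x: "x \<in> H"
      have hc: "h \<in> carrier G" "x \<in> carrier G"
        using subgroup.mem_carrier[OF assms(1) assms(2)] subgroup.mem_carrier[OF assms(1) x] by auto
      have "inv h \<otimes> x \<otimes> h \<in> H"
        using assms x by (auto intro!: subgroup.m_closed subgroup.m_inv_closed)
      moreover have "h \<otimes> (inv h \<otimes> x \<otimes> h) \<otimes> inv h = x"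
      proof -
        have "h \<otimes> (inv h \<otimes> x \<otimes> h) \<otimes> inv h = h \<otimes> (inv h \<otimes> x) \<otimes> (h \<otimes> inv h)"
          using hc by (simp add: m_assoc)
        also have "\<dots> = h \<otimes> (inv h \<otimes> x)" using hc by simp
        also have "\<dots> = (h \<otimes> inv h) \<otimes> x" using m_assoc[OF hc(1) inv_closed[OF hc(1)] hc(2)] by (rule sym)
        also have "\<dots> = x" using hc by simp
        finally show ?thesis .
      qed
      ultimately show "x \<in> (\<lambda>x. h \<otimes> x \<otimes> inv h) ` H" by (metis image_eqI)
    qed
  qed
  thus ?thesis using normalizer_iff assms subgroup.subset subgroup.mem_carrier by metis
qed

lemma pgroup_card_sub:
  assumes G: "group G" "finite (carrier G)" "card (carrier G) = p ^ n" "Factorial_Ring.prime p"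
    and H: "subgroup H G"
  shows "\<exists>i. card H = p ^ i"
proof -
  have "card (rcosets\<^bsub>G\<^esub> H) * card H = order G" using group.lagrange[OF G(1) H] .
  hence "card H dvd p ^ n" using G by (metis dvd_triv_right order_def)
  thus ?thesis using divides_primepow_nat[OF G(4)] by auto
qed

lemma pgroup_subgroup:
  assumes G: "group G" "finite (carrier G)" "card (carrier G) = p ^ n" "Factorial_Ring.prime p"
    and H: "subgroup H G"
  shows "group (G\<lparr>carrier := H\<rparr>)" "finite (carrier (G\<lparr>carrier := H\<rparr>))"
    "\<exists>i. card (carrier (G\<lparr>carrier := H\<rparr>)) = p ^ i"
  using pgroup_card_sub[OF G H] group.subgroup_imp_group[OF G(1) H] G(2) H
    finite_subset[OF subgroup.subset[OF H]] by auto

lemma sylow_conj: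
  assumes A: "group A" "finite (carrier A)" and K: "subgroup K A"
    and cK: "card K = p ^ multiplicity p (order A)" and p: "Factorial_Ring.prime p"
    and H: "group H" "finite (carrier H)" "card (carrier H) = p ^ n"
    and l: "\<And>g. g \<in> carrier H \<Longrightarrow> l g \<in> carrier A"
    and lh: "\<And>g h. g \<in> carrier H \<Longrightarrow> h \<in> carrier H \<Longrightarrow> l (g \<otimes>\<^bsub>H\<^esub> h) = l g \<otimes>\<^bsub>A\<^esub> l h"
  shows "\<exists>b\<in>carrier A. \<forall>g\<in>carrier H. b \<otimes>\<^bsub>A\<^esub> l g \<otimes>\<^bsub>A\<^esub> inv\<^bsub>A\<^esub> b \<in> K"
proof -
  interpret A: group A by fact
  interpret H: group H by fact
  have l1: "l \<one>\<^bsub>H\<^esub> = \<one>\<^bsub>A\<^esub>"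
  proof -
    have "l \<one>\<^bsub>H\<^esub> \<otimes>\<^bsub>A\<^esub> l \<one>\<^bsub>H\<^esub> = l \<one>\<^bsub>H\<^esub> \<otimes>\<^bsub>A\<^esub> \<one>\<^bsub>A\<^esub>"
      using lh[of "\<one>\<^bsub>H\<^esub>" "\<one>\<^bsub>H\<^esub>"] l[of "\<one>\<^bsub>H\<^esub>"] by simp
    thus ?thesis using l[of "\<one>\<^bsub>H\<^esub>"] A.l_cancel by (meson A.one_closed H.one_closed)
  qed
  define f where "f g C = C #>\<^bsub>A\<^esub> inv\<^bsub>A\<^esub> (l g)" for g C
  have Ksub: "K \<subseteq> carrier A" using K subgroup.subset by blast
  have act: "is_action H (rcosets\<^bsub>A\<^esub> K) f"
    unfolding is_action_def
  proof (intro conjI ballI)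
    fix g C assume g: "g \<in> carrier H" and C: "C \<in> rcosets\<^bsub>A\<^esub> K"
    then obtain a where a: "a \<in> carrier A" "C = K #>\<^bsub>A\<^esub> a" unfolding RCOSETS_def by auto
    show "f g C \<in> rcosets\<^bsub>A\<^esub> K"
      unfolding f_def a using A.coset_mult_assoc[OF Ksub a(1), of "inv\<^bsub>A\<^esub> l g"] l[OF g] a
      by (simp add: A.rcosetsI Ksub)
  next
    fix C assume C: "C \<in> rcosets\<^bsub>A\<^esub> K"
    show "f \<one>\<^bsub>H\<^esub> C = C" unfolding f_def l1
      using C K A.coset_mult_one subgroup.rcosets_carrier[OF K A.is_group] by simp
  next
    fix g h C assume g: "g \<in> carrier H" and h: "h \<in> carrier H" and C: "C \<in> rcosets\<^bsub>A\<^esub> K"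
    have Cs: "C \<subseteq> carrier A" using subgroup.rcosets_carrier[OF K A.is_group C] .
    show "f (g \<otimes>\<^bsub>H\<^esub> h) C = f g (f h C)"
      unfolding f_def using lh[OF g h] l[OF g] l[OF h] Cs
      by (simp add: A.inv_mult_group A.coset_mult_assoc)
  qed
  have finE: "finite (rcosets\<^bsub>A\<^esub> K)"
    using A(2) A.rcosets_subset_PowG[OF K] finite_subset by (metis finite_Pow_iff)
  have fm: "card (rcosets\<^bsub>A\<^esub> K) mod p = card {C \<in> rcosets\<^bsub>A\<^esub> K. \<forall>g\<in>carrier H. f g C = C} mod p"
    by (rule fix_mod[OF H p act finE])
  have lag: "card (rcosets\<^bsub>A\<^esub> K) * card K = order A" using A.lagrange[OF K] .
  have ordpos: "order A > 0" using A(2) A.one_closed by (auto simp: order_def card_gt_0_iff)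
  have ndvd: "\<not> p dvd card (rcosets\<^bsub>A\<^esub> K)"
  proof
    assume "p dvd card (rcosets\<^bsub>A\<^esub> K)"
    hence "p * p ^ multiplicity p (order A) dvd order A"
      using lag cK by (metis mult_dvd_mono dvd_refl mult.commute)
    hence "p ^ Suc (multiplicity p (order A)) dvd order A" by simp
    moreover have "\<not> is_unit p" using p by (metis not_prime_unit)
    ultimately show False using power_dvd_iff_le_multiplicity[of "order A" p] ordpos
      by (metis Suc_n_not_le_n less_numeral_extra(3))
  qed
  have "card {C \<in> rcosets\<^bsub>A\<^esub> K. \<forall>g\<in>carrier H. f g C = C} \<noteq> 0"
  proof
    assume "card {C \<in> rcosets\<^bsub>A\<^esub> K. \<forall>g\<in>carrier H. f g C = C} = 0"
    hence "card (rcosets\<^bsub>A\<^esub> K) mod p = 0" using fm by simp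
    thus False using ndvd by (simp add: dvd_eq_mod_eq_0)
  qed
  hence "{C \<in> rcosets\<^bsub>A\<^esub> K. \<forall>g\<in>carrier H. f g C = C} \<noteq> {}" by (metis card.empty)
  then obtain C where C: "C \<in> rcosets\<^bsub>A\<^esub> K" "\<forall>g\<in>carrier H. f g C = C"
    by blast
  then obtain b where b: "b \<in> carrier A" "C = K #>\<^bsub>A\<^esub> b" unfolding RCOSETS_def by auto
  show ?thesis
  proof (intro bexI[OF _ b(1)] ballI)
    fix g assume g: "g \<in> carrier H"
    have lg: "l g \<in> carrier A" using l[OF g] .
    have "K #>\<^bsub>A\<^esub> (b \<otimes>\<^bsub>A\<^esub> inv\<^bsub>A\<^esub> l g) = K #>\<^bsub>A\<^esub> b"
      using C(2) g b lg A.coset_mult_assoc[OF Ksub b(1) A.inv_closed[OF lg]] unfolding f_def by simp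
    hence "b \<otimes>\<^bsub>A\<^esub> inv\<^bsub>A\<^esub> l g \<otimes>\<^bsub>A\<^esub> inv\<^bsub>A\<^esub> b \<in> K"
      using A.coset_mult_inv2[of K "b \<otimes>\<^bsub>A\<^esub> inv\<^bsub>A\<^esub> l g" b] b lg Ksub
        A.coset_join1[OF _ _ K] by simp
    hence "inv\<^bsub>A\<^esub> (b \<otimes>\<^bsub>A\<^esub> inv\<^bsub>A\<^esub> l g \<otimes>\<^bsub>A\<^esub> inv\<^bsub>A\<^esub> b) \<in> K"
      by (rule subgroup.m_inv_closed[OF K])
    moreover have "inv\<^bsub>A\<^esub> (b \<otimes>\<^bsub>A\<^esub> inv\<^bsub>A\<^esub> l g \<otimes>\<^bsub>A\<^esub> inv\<^bsub>A\<^esub> b) = b \<otimes>\<^bsub>A\<^esub> (l g \<otimes>\<^bsub>A\<^esub> inv\<^bsub>A\<^esub> b)"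
      using b lg by (simp add: A.inv_mult_group)
    moreover have "b \<otimes>\<^bsub>A\<^esub> (l g \<otimes>\<^bsub>A\<^esub> inv\<^bsub>A\<^esub> b) = b \<otimes>\<^bsub>A\<^esub> l g \<otimes>\<^bsub>A\<^esub> inv\<^bsub>A\<^esub> b"
      using b lg by (simp add: A.m_assoc)
    ultimately show "b \<otimes>\<^bsub>A\<^esub> l g \<otimes>\<^bsub>A\<^esub> inv\<^bsub>A\<^esub> b \<in> K" by simp
  qed
qed

lemma coset_trick:
  assumes G: "group G" "finite (carrier G)" "card (carrier G) = p ^ n" and p: "Factorial_Ring.prime p"
    and P: "subgroup P G" and D: "subgroup D G"
    and nz: "\<And>x d. x \<in> P \<Longrightarrow> d \<in> D \<Longrightarrow> x \<otimes>\<^bsub>G\<^esub> d \<otimes>\<^bsub>G\<^esub> inv\<^bsub>G\<^esub> x \<in> D"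
    and nd: "\<And>d. d \<in> D \<Longrightarrow> d \<in> normalizer G P \<Longrightarrow> d \<in> P"
  shows "D \<subseteq> P"
proof -
  interpret G: group G by fact
  have Ps: "P \<subseteq> carrier G" using P subgroup.subset by blast
  have Ds: "D \<subseteq> carrier G" using D subgroup.subset by blast
  have Pc: "\<And>x. x \<in> P \<Longrightarrow> x \<in> carrier G" using Ps by blast
  have Dc: "\<And>x. x \<in> D \<Longrightarrow> x \<in> carrier G" using Ds by blast
  have finP: "finite P" using G(2) Ps finite_subset by blast
  define E where "E = {P #>\<^bsub>G\<^esub> d | d. d \<in> D}"
  define f where "f x C = C #>\<^bsub>G\<^esub> inv\<^bsub>G\<^esub> x" for x C
  have finE: "finite E"
  proof -
    have "E \<subseteq> Pow (carrier G)" unfolding E_def using Ps Dc G.r_coset_subset_G by blast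
    thus ?thesis using G(2) finite_subset by blast
  qed
  have PE: "P \<in> E" unfolding E_def using D subgroup.one_closed Ps
    by (auto intro!: exI[of _ "\<one>\<^bsub>G\<^esub>"])
  have fPd: "f x (P #>\<^bsub>G\<^esub> d) = P #>\<^bsub>G\<^esub> (d \<otimes>\<^bsub>G\<^esub> inv\<^bsub>G\<^esub> x)" if "x \<in> carrier G" "d \<in> carrier G" for x d
    unfolding f_def using G.coset_mult_assoc[OF Ps] that by simp
  have H1: "group (G\<lparr>carrier := P\<rparr>)" using G.subgroup_imp_group[OF P] .
  have act1: "is_action (G\<lparr>carrier := P\<rparr>) E f"
    unfolding is_action_def
  proof (intro conjI ballI)
    fix x C assume x: "x \<in> carrier (G\<lparr>carrier := P\<rparr>)" and C: "C \<in> E"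
    then obtain d where d: "d \<in> D" "C = P #>\<^bsub>G\<^esub> d" unfolding E_def by auto
    have xP: "x \<in> P" using x by simp
    have "x \<otimes>\<^bsub>G\<^esub> d \<otimes>\<^bsub>G\<^esub> inv\<^bsub>G\<^esub> x \<in> P #>\<^bsub>G\<^esub> (d \<otimes>\<^bsub>G\<^esub> inv\<^bsub>G\<^esub> x)"
      using G.rcosI[OF xP Ps, of "d \<otimes>\<^bsub>G\<^esub> inv\<^bsub>G\<^esub> x"] Pc[OF xP] Dc[OF d(1)]
      by (simp add: G.m_assoc)
    hence "P #>\<^bsub>G\<^esub> (d \<otimes>\<^bsub>G\<^esub> inv\<^bsub>G\<^esub> x) = P #>\<^bsub>G\<^esub> (x \<otimes>\<^bsub>G\<^esub> d \<otimes>\<^bsub>G\<^esub> inv\<^bsub>G\<^esub> x)"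
      using G.repr_independence[OF _ _ P] Pc[OF xP] Dc[OF d(1)] by simp
    thus "f x C \<in> E" using fPd[OF Pc[OF xP] Dc[OF d(1)]] d nz[OF xP d(1)] unfolding E_def by auto
  next
    fix C assume C: "C \<in> E"
    then obtain d where d: "d \<in> D" "C = P #>\<^bsub>G\<^esub> d" unfolding E_def by auto
    show "f \<one>\<^bsub>G\<lparr>carrier := P\<rparr>\<^esub> C = C"
      using fPd[of "\<one>\<^bsub>G\<^esub>" d] d Dc by simp
  next
    fix x y C assume x: "x \<in> carrier (G\<lparr>carrier := P\<rparr>)" and y: "y \<in> carrier (G\<lparr>carrier := P\<rparr>)" and C: "C \<in> E"
    then obtain d where d: "d \<in> D" "C = P #>\<^bsub>G\<^esub> d" unfolding E_def by auto
    have xc: "x \<in> carrier G" "y \<in> carrier G" using x y Pc by auto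
    show "f (x \<otimes>\<^bsub>G\<lparr>carrier := P\<rparr>\<^esub> y) C = f x (f y C)"
      unfolding f_def d(2) using xc G.coset_mult_assoc[OF G.r_coset_subset_G[OF Ps Dc[OF d(1)]], of "inv\<^bsub>G\<^esub> y" "inv\<^bsub>G\<^esub> x"]
      by (simp add: G.inv_mult_group)
  qed
  have cP: "\<exists>i. card (carrier (G\<lparr>carrier := P\<rparr>)) = p ^ i"
    using pgroup_subgroup[OF G p P] by blast
  then obtain i where i: "card (carrier (G\<lparr>carrier := P\<rparr>)) = p ^ i" by blast
  have fm: "card E mod p = card {C\<in>E. \<forall>g\<in>carrier (G\<lparr>carrier := P\<rparr>). f g C = C} mod p"
    by (rule fix_mod[OF H1 _ i p act1 finE]) (use finP in simp)
  have fixs: "{C\<in>E. \<forall>g\<in>carrier (G\<lparr>carrier := P\<rparr>). f g C = C} = {P}"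
  proof
    show "{P} \<subseteq> {C\<in>E. \<forall>g\<in>carrier (G\<lparr>carrier := P\<rparr>). f g C = C}"
    proof -
      have "\<forall>g\<in>carrier (G\<lparr>carrier := P\<rparr>). f g P = P"
      proof
        fix x assume "x \<in> carrier (G\<lparr>carrier := P\<rparr>)"
        hence xP: "x \<in> P" by simp
        have ix: "inv\<^bsub>G\<^esub> x \<in> P" using subgroup.m_inv_closed[OF P xP] .
        show "f x P = P" unfolding f_def by (rule G.coset_join2[OF Pc[OF ix] P ix])
      qed
      thus ?thesis using PE by blast
    qed
  next
    show "{C\<in>E. \<forall>g\<in>carrier (G\<lparr>carrier := P\<rparr>). f g C = C} \<subseteq> {P}"
    proof
      fix C assume C: "C \<in> {C\<in>E. \<forall>g\<in>carrier (G\<lparr>carrier := P\<rparr>). f g C = C}"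
      then obtain d where d: "d \<in> D" "C = P #>\<^bsub>G\<^esub> d" unfolding E_def by auto
      have dc: "d \<in> carrier G" using Dc d by blast
      have "d \<otimes>\<^bsub>G\<^esub> y \<otimes>\<^bsub>G\<^esub> inv\<^bsub>G\<^esub> d \<in> P" if yP: "y \<in> P" for y
      proof -
        have iy: "inv\<^bsub>G\<^esub> y \<in> P" using subgroup.m_inv_closed[OF P yP] .
        have "f (inv\<^bsub>G\<^esub> y) C = C" using C iy by simp
        hence "P #>\<^bsub>G\<^esub> (d \<otimes>\<^bsub>G\<^esub> y) = P #>\<^bsub>G\<^esub> d"
          using fPd[OF Pc[OF iy] dc] d Pc[OF yP] by simp
        hence "P #>\<^bsub>G\<^esub> (d \<otimes>\<^bsub>G\<^esub> y \<otimes>\<^bsub>G\<^esub> inv\<^bsub>G\<^esub> d) = P"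
          using G.coset_mult_inv2[OF _ _ dc Ps] dc Pc[OF yP] by simp
        thus ?thesis using G.coset_join1[OF _ _ P] dc Pc[OF yP] by simp
      qed
      hence "d \<in> normalizer G P" using G.normalizer_intro[OF finP Ps dc] by blast
      hence "d \<in> P" using nd d by blast
      thus "C \<in> {P}" using d G.coset_join2[OF dc P] by simp
    qed
  qed
  have p1: "p > 1" using p prime_gt_1_nat by blast
  have Emod: "card E mod p = 1" using fm fixs p1 by simp
  have H2: "group (G\<lparr>carrier := D\<rparr>)" using G.subgroup_imp_group[OF D] .
  have act2: "is_action (G\<lparr>carrier := D\<rparr>) E f"
    unfolding is_action_def
  proof (intro conjI ballI)
    fix x C assume x: "x \<in> carrier (G\<lparr>carrier := D\<rparr>)" and C: "C \<in> E"
    then obtain d where d: "d \<in> D" "C = P #>\<^bsub>G\<^esub> d" unfolding E_def by auto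
    have "d \<otimes>\<^bsub>G\<^esub> inv\<^bsub>G\<^esub> x \<in> D" using x d D by (simp add: subgroup.m_closed subgroup.m_inv_closed)
    thus "f x C \<in> E" using fPd[of x d] x d Dc unfolding E_def by auto
  next
    fix C assume C: "C \<in> E"
    then obtain d where d: "d \<in> D" "C = P #>\<^bsub>G\<^esub> d" unfolding E_def by auto
    show "f \<one>\<^bsub>G\<lparr>carrier := D\<rparr>\<^esub> C = C"
      using fPd[of "\<one>\<^bsub>G\<^esub>" d] d Dc by simp
  next
    fix x y C assume x: "x \<in> carrier (G\<lparr>carrier := D\<rparr>)" and y: "y \<in> carrier (G\<lparr>carrier := D\<rparr>)" and C: "C \<in> E"
    then obtain d where d: "d \<in> D" "C = P #>\<^bsub>G\<^esub> d" unfolding E_def by auto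
    have xc: "x \<in> carrier G" "y \<in> carrier G" using x y Dc by auto
    show "f (x \<otimes>\<^bsub>G\<lparr>carrier := D\<rparr>\<^esub> y) C = f x (f y C)"
      unfolding f_def d(2) using xc G.coset_mult_assoc[OF G.r_coset_subset_G[OF Ps Dc[OF d(1)]], of "inv\<^bsub>G\<^esub> y" "inv\<^bsub>G\<^esub> x"]
      by (simp add: G.inv_mult_group)
  qed
  have orb: "porbit (G\<lparr>carrier := D\<rparr>) f P = E"
  proof
    show "porbit (G\<lparr>carrier := D\<rparr>) f P \<subseteq> E" using porbit_sub[OF act2 PE] .
    show "E \<subseteq> porbit (G\<lparr>carrier := D\<rparr>) f P"
    proof
      fix C assume "C \<in> E"
      then obtain d where d: "d \<in> D" "C = P #>\<^bsub>G\<^esub> d" unfolding E_def by auto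
      have "inv\<^bsub>G\<^esub> d \<in> D" using subgroup.m_inv_closed[OF D d(1)] .
      moreover have "f (inv\<^bsub>G\<^esub> d) P = C"
        using d Dc unfolding f_def by simp
      ultimately show "C \<in> porbit (G\<lparr>carrier := D\<rparr>) f P" unfolding porbit_def by force
    qed
  qed
  have "card E dvd order (G\<lparr>carrier := D\<rparr>)" using orbit_card_dvd[OF H2 act2 PE] orb by simp
  moreover obtain j where j: "card (carrier (G\<lparr>carrier := D\<rparr>)) = p ^ j"
    using pgroup_subgroup[OF G p D] by blast
  ultimately obtain k where k: "card E = p ^ k" using divides_primepow_nat[OF p] by (auto simp: order_def)
  have "k = 0"
  proof (rule ccontr)
    assume "k \<noteq> 0"
    hence "card E mod p = 0" using k by (simp add: dvd_power)
    thus False using Emod by simp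
  qed
  hence "card E = 1" using k by simp
  hence Eeq: "E = {P}" using PE by (metis card_1_singletonE singletonD)
  show "D \<subseteq> P"
  proof
    fix d assume d: "d \<in> D"
    hence "P #>\<^bsub>G\<^esub> d \<in> E" unfolding E_def by auto
    hence "P #>\<^bsub>G\<^esub> d = P" using Eeq by simp
    thus "d \<in> P" using G.coset_join1[OF _ _ P] Dc d by simp
  qed
qed

lemma (in group) conj_conj:
  assumes "g \<in> carrier G" "h \<in> carrier G" "y \<in> carrier G"
  shows "g \<otimes> (h \<otimes> y \<otimes> inv h) \<otimes> inv g = (g \<otimes> h) \<otimes> y \<otimes> inv (g \<otimes> h)"
  using assms by (simp add: inv_mult_group m_assoc)

lemma (in group) centralizer_subgroup:
  assumes "R \<subseteq> carrier G"
  shows "subgroup (centralizer G R) G"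
proof (rule subgroupI)
  show "centralizer G R \<subseteq> carrier G" unfolding centralizer_def by auto
  show "centralizer G R \<noteq> {}" unfolding centralizer_def using assms
    by (auto intro!: exI[of _ "\<one>"] simp: subset_iff)
next
  fix a assume a: "a \<in> centralizer G R"
  hence ac: "a \<in> carrier G" and com: "\<And>h. h \<in> R \<Longrightarrow> a \<otimes> h = h \<otimes> a" unfolding centralizer_def by auto
  have "inv a \<otimes> h = h \<otimes> inv a" if h: "h \<in> R" for h
  proof -
    have hc: "h \<in> carrier G" using h assms by auto
    have "inv a \<otimes> h = inv a \<otimes> (h \<otimes> a) \<otimes> inv a" using ac hc by (simp add: m_assoc)
    also have "\<dots> = inv a \<otimes> (a \<otimes> h) \<otimes> inv a" using com[OF h] by simp
    also have "\<dots> = h \<otimes> inv a" using ac hc by (simp add: m_assoc[symmetric])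
    finally show ?thesis .
  qed
  thus "inv a \<in> centralizer G R" unfolding centralizer_def using ac by auto
next
  fix a b assume a: "a \<in> centralizer G R" and b: "b \<in> centralizer G R"
  hence ac: "a \<in> carrier G" "b \<in> carrier G" and com: "\<And>h. h \<in> R \<Longrightarrow> a \<otimes> h = h \<otimes> a" "\<And>h. h \<in> R \<Longrightarrow> b \<otimes> h = h \<otimes> b"
    unfolding centralizer_def by auto
  have "a \<otimes> b \<otimes> h = h \<otimes> (a \<otimes> b)" if h: "h \<in> R" for h
  proof -
    have hc: "h \<in> carrier G" using h assms by auto
    have "a \<otimes> b \<otimes> h = a \<otimes> (h \<otimes> b)" using ac hc com(2)[OF h] by (simp add: m_assoc)
    also have "\<dots> = (a \<otimes> h) \<otimes> b" using ac hc by (simp add: m_assoc)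
    also have "\<dots> = h \<otimes> (a \<otimes> b)" using ac hc com(1)[OF h] by (simp add: m_assoc)
    finally show ?thesis .
  qed
  thus "a \<otimes> b \<in> centralizer G R" unfolding centralizer_def using ac by auto
qed

locale satfs =
  fixes p :: nat and G :: "('a, 'b) monoid_scheme" (structure) and F :: "'a set \<Rightarrow> 'a set \<Rightarrow> ('a \<Rightarrow> 'a) set"
  assumes sat: "saturated p G F"
begin

lemma fs: "fusion_system p G F" using sat unfolding saturated_def by blast

lemma grp: "group G" and fin: "finite (carrier G)" and prm: "Factorial_Ring.prime p"
  and ordp: "\<exists>n. card (carrier G) = p ^ n"
  using fs unfolding fusion_system_def finite_p_group_def by auto

sublocale G: group G by (rule grp)

lemmas fsc = fs[unfolded fusion_system_def]
lemmas ax_sg = fsc[THEN conjunct2, THEN conjunct1]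
lemmas ax_ih = fsc[THEN conjunct2, THEN conjunct2, THEN conjunct1]
lemmas ax_comp = fsc[THEN conjunct2, THEN conjunct2, THEN conjunct2, THEN conjunct1]
lemmas ax_conj = fsc[THEN conjunct2, THEN conjunct2, THEN conjunct2, THEN conjunct2, THEN conjunct1]
lemmas ax_fact = fsc[THEN conjunct2, THEN conjunct2, THEN conjunct2, THEN conjunct2, THEN conjunct2]

lemma F_sg: "\<phi> \<in> F U V \<Longrightarrow> subgroup U G \<and> subgroup V G"
  using ax_sg by blast

lemma F_ih: "\<phi> \<in> F U V \<Longrightarrow> \<phi> \<in> inj_homs G U V"
  using ax_ih by blast

lemma F_ext: "\<phi> \<in> F U V \<Longrightarrow> \<phi> \<in> extensional U"
  and F_img: "\<phi> \<in> F U V \<Longrightarrow> \<phi> ` U \<subseteq> V"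
  and F_inj: "\<phi> \<in> F U V \<Longrightarrow> inj_on \<phi> U"
  and F_hom: "\<phi> \<in> F U V \<Longrightarrow> x \<in> U \<Longrightarrow> y \<in> U \<Longrightarrow> \<phi> (x \<otimes> y) = \<phi> x \<otimes> \<phi> y"
  using F_ih unfolding inj_homs_def by blast+

lemma F_comp: "\<phi> \<in> F U V \<Longrightarrow> \<psi> \<in> F V W \<Longrightarrow> (\<lambda>x \<in> U. \<psi> (\<phi> x)) \<in> F U W"
  using ax_comp by blast

lemma F_conj: "subgroup U G \<Longrightarrow> subgroup V G \<Longrightarrow> g \<in> carrier G \<Longrightarrow> conjmap G g U ` U \<subseteq> V
   \<Longrightarrow> conjmap G g U \<in> F U V"
  using ax_conj by blast

lemma F_fact1: "\<phi> \<in> F U V \<Longrightarrow> \<phi> \<in> F U (\<phi> ` U)"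
  using ax_fact by blast

lemma F_fact2: "\<phi> \<in> F U V \<Longrightarrow> (\<lambda>y \<in> \<phi> ` U. the_inv_into U \<phi> y) \<in> F (\<phi> ` U) U"
  using ax_fact by blast

lemma sgc: "subgroup U G \<Longrightarrow> x \<in> U \<Longrightarrow> x \<in> carrier G"
  by (rule subgroup.mem_carrier)

lemma F_val: "\<phi> \<in> F U V \<Longrightarrow> x \<in> U \<Longrightarrow> \<phi> x \<in> V"
  using F_img by blast

lemma F_valc: "\<phi> \<in> F U V \<Longrightarrow> x \<in> U \<Longrightarrow> \<phi> x \<in> carrier G"
  using F_val F_sg sgc by meson

lemma conjmap_one: "subgroup U G \<Longrightarrow> conjmap G \<one> U = (\<lambda>x\<in>U. x)"
  unfolding conjmap_def using sgc by (auto simp: fun_eq_iff)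

lemma F_incl: "subgroup U G \<Longrightarrow> subgroup V G \<Longrightarrow> U \<subseteq> V \<Longrightarrow> (\<lambda>x\<in>U. x) \<in> F U V"
  using F_conj[of U V "\<one>"] conjmap_one[of U] by auto

lemma F_img_sg: "\<phi> \<in> F U V \<Longrightarrow> subgroup (\<phi> ` U) G"
  using F_fact1 F_sg by blast

lemma F_widen:
  assumes "\<phi> \<in> F U V" "subgroup W G" "\<phi> ` U \<subseteq> W"
  shows "\<phi> \<in> F U W"
proof -
  have "(\<lambda>x\<in>U. (\<lambda>y\<in>\<phi> ` U. y) (\<phi> x)) \<in> F U W"
    using F_comp[OF F_fact1[OF assms(1)] F_incl[OF F_img_sg[OF assms(1)] assms(2,3)]] .
  moreover have "(\<lambda>x\<in>U. (\<lambda>y\<in>\<phi> ` U. y) (\<phi> x)) = \<phi>"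
    using F_ext[OF assms(1)] by (auto simp: fun_eq_iff extensional_def)
  ultimately show ?thesis by simp
qed

lemma F_restr:
  assumes "\<phi> \<in> F U V" "subgroup U1 G" "U1 \<subseteq> U"
  shows "restrict \<phi> U1 \<in> F U1 V"
proof -
  have "(\<lambda>x\<in>U1. \<phi> ((\<lambda>x\<in>U1. x) x)) \<in> F U1 V"
    using F_comp[OF F_incl[OF assms(2) conjunct1[OF F_sg[OF assms(1)]] assms(3)] assms(1)] .
  moreover have "(\<lambda>x\<in>U1. \<phi> ((\<lambda>x\<in>U1. x) x)) = restrict \<phi> U1"
    using assms(3) by (auto simp: fun_eq_iff)
  ultimately show ?thesis by simp
qed

lemma F_one: assumes "\<phi> \<in> F U V" shows "\<phi> \<one> = \<one>"
proof -
  have U: "subgroup U G" using F_sg[OF assms] by blast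
  have o: "\<one> \<in> U" using subgroup.one_closed[OF U] .
  have c: "\<phi> \<one> \<in> carrier G" using F_valc[OF assms o] .
  have "\<phi> \<one> \<otimes> \<phi> \<one> = \<phi> \<one> \<otimes> \<one>" using F_hom[OF assms o o] c by simp
  thus ?thesis using c by simp
qed

lemma F_inv: assumes "\<phi> \<in> F U V" "x \<in> U" shows "\<phi> (inv x) = inv (\<phi> x)"
proof -
  have U: "subgroup U G" using F_sg[OF assms(1)] by blast
  have ix: "inv x \<in> U" using subgroup.m_inv_closed[OF U assms(2)] .
  have xc: "x \<in> carrier G" using sgc[OF U assms(2)] .
  have "\<phi> (inv x) \<otimes> \<phi> x = \<one>" using F_hom[OF assms(1) ix assms(2)] F_one[OF assms(1)] xc by simp
  thus ?thesis using G.inv_equality F_valc[OF assms(1) ix] F_valc[OF assms] by metis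
qed

lemma F_inverse:
  assumes "\<phi> \<in> F U V"
  shows "(\<lambda>y \<in> \<phi> ` U. the_inv_into U \<phi> y) \<in> F (\<phi> ` U) (carrier G)"
    and "(\<lambda>y \<in> \<phi> ` U. the_inv_into U \<phi> y) ` (\<phi> ` U) = U"
    and "\<And>x. x \<in> U \<Longrightarrow> (\<lambda>y \<in> \<phi> ` U. the_inv_into U \<phi> y) (\<phi> x) = x"
proof -
  have U: "subgroup U G" using F_sg[OF assms(1)] by blast
  show "(\<lambda>y \<in> \<phi> ` U. the_inv_into U \<phi> y) ` (\<phi> ` U) = U"
    using the_inv_into_onto[OF F_inj[OF assms]] by simp
  thus "(\<lambda>y \<in> \<phi> ` U. the_inv_into U \<phi> y) \<in> F (\<phi> ` U) (carrier G)"
    using F_widen[OF F_fact2[OF assms] G.subgroup_self] U subgroup.subset by metis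
  show "\<And>x. x \<in> U \<Longrightarrow> (\<lambda>y \<in> \<phi> ` U. the_inv_into U \<phi> y) (\<phi> x) = x"
    using the_inv_into_f_f[OF F_inj[OF assms]] by simp
qed

definition AG :: "'a set \<Rightarrow> ('a \<Rightarrow> 'a) monoid" where
  "AG U = \<lparr>carrier = F U U, monoid.mult = (\<lambda>a b. \<lambda>x\<in>U. a (b x)), one = (\<lambda>x\<in>U. x)\<rparr>"

lemma AG_carrier [simp]: "carrier (AG U) = F U U" by (simp add: AG_def)
lemma AG_mult [simp]: "a \<otimes>\<^bsub>AG U\<^esub> b = (\<lambda>x\<in>U. a (b x))" by (simp add: AG_def)
lemma AG_one [simp]: "\<one>\<^bsub>AG U\<^esub> = (\<lambda>x\<in>U. x)" by (simp add: AG_def)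

lemma aut_surj: assumes "a \<in> F U U" shows "a ` U = U"
proof -
  have U: "subgroup U G" using F_sg[OF assms] by blast
  have finX: "finite U" using fin subgroup.subset[OF U] finite_subset by blast
  have "card (a ` U) = card U" using card_image[OF F_inj[OF assms]] .
  thus ?thesis using card_subset_eq[OF finX F_img[OF assms]] by simp
qed

lemma AG_group: assumes U: "subgroup U G" shows "group (AG U)"
proof (rule groupI)
  fix a b assume "a \<in> carrier (AG U)" "b \<in> carrier (AG U)"
  thus "a \<otimes>\<^bsub>AG U\<^esub> b \<in> carrier (AG U)" using F_comp by simp
next
  show "\<one>\<^bsub>AG U\<^esub> \<in> carrier (AG U)" using F_incl[OF U U] by simp
next
  fix a b c assume "a \<in> carrier (AG U)" "b \<in> carrier (AG U)" "c \<in> carrier (AG U)"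
  thus "a \<otimes>\<^bsub>AG U\<^esub> b \<otimes>\<^bsub>AG U\<^esub> c = a \<otimes>\<^bsub>AG U\<^esub> (b \<otimes>\<^bsub>AG U\<^esub> c)"
    using F_val by (auto simp: fun_eq_iff)
next
  fix a assume a: "a \<in> carrier (AG U)"
  hence a': "a \<in> F U U" by simp
  show "\<one>\<^bsub>AG U\<^esub> \<otimes>\<^bsub>AG U\<^esub> a = a"
    using F_val[OF a'] F_ext[OF a'] by (auto simp: fun_eq_iff extensional_def)
  have "(\<lambda>y \<in> a ` U. the_inv_into U a y) \<in> F U U"
    using F_fact2[OF a'] aut_surj[OF a'] by simp
  moreover have "(\<lambda>y \<in> a ` U. the_inv_into U a y) \<otimes>\<^bsub>AG U\<^esub> a = \<one>\<^bsub>AG U\<^esub>"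
    using the_inv_into_f_f[OF F_inj[OF a']] by (auto simp: fun_eq_iff)
  ultimately show "\<exists>y\<in>carrier (AG U). y \<otimes>\<^bsub>AG U\<^esub> a = \<one>\<^bsub>AG U\<^esub>" by (intro bexI) auto
qed

lemma AG_inv_app:
  assumes U: "subgroup U G" and a: "a \<in> F U U" and x: "x \<in> U"
  shows "(inv\<^bsub>AG U\<^esub> a) (a x) = x"
proof -
  interpret A: group "AG U" using AG_group[OF U] .
  have "inv\<^bsub>AG U\<^esub> a \<otimes>\<^bsub>AG U\<^esub> a = \<one>\<^bsub>AG U\<^esub>" using A.l_inv a by simp
  hence "(inv\<^bsub>AG U\<^esub> a \<otimes>\<^bsub>AG U\<^esub> a) x = \<one>\<^bsub>AG U\<^esub> x" by simp
  thus ?thesis using x by simp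
qed

lemma AG_inv_in:
  assumes U: "subgroup U G" and a: "a \<in> F U U"
  shows "inv\<^bsub>AG U\<^esub> a \<in> F U U"
proof -
  interpret A: group "AG U" using AG_group[OF U] .
  show ?thesis using A.inv_closed a by simp
qed

end

context satfs
begin

lemmas satc = sat[unfolded saturated_def]
lemmas sat1 = satc[THEN conjunct2, THEN conjunct1]
lemmas sat2 = satc[THEN conjunct2, THEN conjunct2]

lemma fn_fc: "fully_normalized G F U \<Longrightarrow> fully_centralized G F U"
  using sat1 by blast

lemma fn_syl: "fully_normalized G F U \<Longrightarrow> sylow_in p (AutS G U) (AutF F U)"
  using sat1 by blast

lemma ext_ax: "subgroup V G \<Longrightarrow> \<phi> \<in> F V (carrier G) \<Longrightarrow> fully_centralized G F (\<phi> ` V) \<Longrightarrow>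
   \<exists>\<psi>\<in>F (N_phi G V \<phi>) (carrier G). \<forall>x\<in>V. \<psi> x = \<phi> x"
  using sat2 by blast

lemma conjmap_F:
  assumes U: "subgroup U G" and g: "g \<in> normalizer G U"
  shows "conjmap G g U \<in> F U U"
proof -
  have Us: "U \<subseteq> carrier G" using subgroup.subset[OF U] .
  have gc: "g \<in> carrier G" using G.normalizer_carrier[OF Us g] .
  show ?thesis
    by (rule F_conj[OF U U gc]) (auto simp: conjmap_def G.normalizer_conj[OF Us g])
qed

lemma conjmap_mult:
  assumes U: "subgroup U G" and g: "g \<in> normalizer G U" and h: "h \<in> normalizer G U"
  shows "conjmap G g U \<otimes>\<^bsub>AG U\<^esub> conjmap G h U = conjmap G (g \<otimes> h) U"
proof -
  have Us: "U \<subseteq> carrier G" using subgroup.subset[OF U] .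
  have gc: "g \<in> carrier G" using G.normalizer_carrier[OF Us g] .
  have hc: "h \<in> carrier G" using G.normalizer_carrier[OF Us h] .
  show ?thesis
  proof (rule ext)
    fix x
    show "(conjmap G g U \<otimes>\<^bsub>AG U\<^esub> conjmap G h U) x = conjmap G (g \<otimes> h) U x"
    proof (cases "x \<in> U")
      case True
      have xc: "x \<in> carrier G" using Us True by blast
      have "h \<otimes> x \<otimes> inv h \<in> U" using G.normalizer_conj[OF Us h True] .
      thus ?thesis using True G.conj_conj[OF gc hc xc] by (simp add: conjmap_def)
    qed (simp add: conjmap_def)
  qed
qed

lemma AutS_sub:
  assumes U: "subgroup U G"
  shows "subgroup (AutS G U) (AG U)"
proof -
  interpret A: group "AG U" using AG_group[OF U] .
  have Us: "U \<subseteq> carrier G" using subgroup.subset[OF U] .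
  have NU: "subgroup (normalizer G U) G" using G.normalizer_imp_subgroup[OF Us] .
  show ?thesis
  proof (rule A.subgroupI)
    show "AutS G U \<subseteq> carrier (AG U)" unfolding AutS_def using conjmap_F[OF U] by auto
    show "AutS G U \<noteq> {}" unfolding AutS_def using subgroup.one_closed[OF NU] by auto
  next
    fix a assume "a \<in> AutS G U"
    then obtain g where g: "g \<in> normalizer G U" "a = conjmap G g U" unfolding AutS_def by auto
    have gc: "g \<in> carrier G" using G.normalizer_carrier[OF Us g(1)] .
    have ig: "inv g \<in> normalizer G U" using subgroup.m_inv_closed[OF NU g(1)] .
    have "conjmap G (inv g) U \<otimes>\<^bsub>AG U\<^esub> a = \<one>\<^bsub>AG U\<^esub>"
      using conjmap_mult[OF U ig g(1)] g(2) conjmap_one[OF U] gc by simp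
    hence "inv\<^bsub>AG U\<^esub> a = conjmap G (inv g) U"
      using A.inv_equality conjmap_F[OF U ig] conjmap_F[OF U g(1)] g(2) by simp
    thus "inv\<^bsub>AG U\<^esub> a \<in> AutS G U" unfolding AutS_def using ig by auto
  next
    fix a b assume "a \<in> AutS G U" "b \<in> AutS G U"
    then obtain g h where g: "g \<in> normalizer G U" "a = conjmap G g U"
      and h: "h \<in> normalizer G U" "b = conjmap G h U" unfolding AutS_def by auto
    have "g \<otimes> h \<in> normalizer G U" using subgroup.m_closed[OF NU g(1) h(1)] .
    thus "a \<otimes>\<^bsub>AG U\<^esub> b \<in> AutS G U"
      unfolding AutS_def using conjmap_mult[OF U g(1) h(1)] g(2) h(2) by auto
  qed
qed

lemma F_finite: assumes U: "subgroup U G" shows "finite (F U U)"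
proof -
  have finU: "finite U" using fin subgroup.subset[OF U] finite_subset by blast
  have "F U U \<subseteq> PiE U (\<lambda>_. U)"
  proof
    fix a assume a: "a \<in> F U U"
    show "a \<in> PiE U (\<lambda>_. U)" using F_ext[OF a] F_val[OF a] by (auto simp: PiE_def)
  qed
  thus ?thesis using finite_PiE[OF finU, of "\<lambda>_. U"] finU finite_subset by blast
qed

lemma key:
  assumes fn: "fully_normalized G F U" and chi: "\<chi> \<in> F V (carrier G)" and img: "\<chi> ` V = U"
  shows "\<exists>\<alpha> \<in> F (normalizer G V) (carrier G). \<alpha> ` V = U"
proof -
  have U: "subgroup U G" using fn unfolding fully_normalized_def by blast
  have V: "subgroup V G" using F_sg[OF chi] by blast
  have Us: "U \<subseteq> carrier G" using subgroup.subset[OF U] .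
  have Vs: "V \<subseteq> carrier G" using subgroup.subset[OF V] .
  have chi1: "\<chi> \<in> F V U" using F_fact1[OF chi] img by simp
  define ci where "ci = (\<lambda>y\<in>\<chi> ` V. the_inv_into V \<chi> y)"
  have chii: "ci \<in> F U V" using F_fact2[OF chi] img unfolding ci_def by simp
  have cichi: "ci (\<chi> v) = v" if "v \<in> V" for v
    using F_inverse(3)[OF chi that] unfolding ci_def .
  define NV where "NV = normalizer G V"
  have NVs: "subgroup NV G" unfolding NV_def using G.normalizer_imp_subgroup[OF Vs] .
  define l where "l g = (\<lambda>x\<in>U. \<chi> (conjmap G g V (ci x)))" for g
  have l_app: "l g z = \<chi> (g \<otimes> ci z \<otimes> inv g)" if z: "z \<in> U" for g z
    unfolding l_def using z F_val[OF chii z] by (simp add: conjmap_def)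
  have l_in: "l g \<in> F U U" if g: "g \<in> NV" for g
  proof -
    have c: "conjmap G g V \<in> F V V" using conjmap_F[OF V] g unfolding NV_def by simp
    have "(\<lambda>x\<in>U. (\<lambda>z\<in>V. \<chi> (conjmap G g V z)) (ci x)) \<in> F U U"
      using F_comp[OF chii F_comp[OF c chi1]] .
    moreover have "(\<lambda>x\<in>U. (\<lambda>z\<in>V. \<chi> (conjmap G g V z)) (ci x)) = l g"
      unfolding l_def using F_val[OF chii] by (auto simp: fun_eq_iff)
    ultimately show ?thesis by simp
  qed
  have l_hom: "l (g \<otimes> h) = l g \<otimes>\<^bsub>AG U\<^esub> l h" if g: "g \<in> NV" and h: "h \<in> NV" for g h
  proof (rule ext)
    fix x
    have gc: "g \<in> carrier G" using G.normalizer_carrier[OF Vs] g unfolding NV_def by blast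
    have hc: "h \<in> carrier G" using G.normalizer_carrier[OF Vs] h unfolding NV_def by blast
    show "l (g \<otimes> h) x = (l g \<otimes>\<^bsub>AG U\<^esub> l h) x"
    proof (cases "x \<in> U")
      case True
      define y where "y = ci x"
      have y: "y \<in> V" using F_val[OF chii True] unfolding y_def .
      have yc: "y \<in> carrier G" using Vs y by blast
      have hy: "h \<otimes> y \<otimes> inv h \<in> V" using G.normalizer_conj[OF Vs _ y] h unfolding NV_def by blast
      have lh: "l h x = \<chi> (h \<otimes> y \<otimes> inv h)"
        using l_app[OF True] unfolding y_def by simp
      have lhU: "l h x \<in> U" using lh F_val[OF chi1 hy] by simp
      have "(l g \<otimes>\<^bsub>AG U\<^esub> l h) x = l g (l h x)" using True by simp
      also have "\<dots> = \<chi> (g \<otimes> (h \<otimes> y \<otimes> inv h) \<otimes> inv g)"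
        using l_app[OF lhU] lh cichi[OF hy] by simp
      also have "\<dots> = \<chi> ((g \<otimes> h) \<otimes> y \<otimes> inv (g \<otimes> h))"
        using G.conj_conj[OF gc hc yc] by simp
      also have "\<dots> = l (g \<otimes> h) x"
        using l_app[OF True] unfolding y_def by simp
      finally show ?thesis by simp
    qed (simp add: l_def)
  qed
  have H: "group (G\<lparr>carrier := NV\<rparr>)" "finite (carrier (G\<lparr>carrier := NV\<rparr>))"
    "\<exists>i. card (carrier (G\<lparr>carrier := NV\<rparr>)) = p ^ i"
    using pgroup_subgroup[OF grp fin _ prm NVs] ordp by auto
  then obtain i where i: "card (carrier (G\<lparr>carrier := NV\<rparr>)) = p ^ i" by blast
  have sy: "card (AutS G U) = p ^ multiplicity p (order (AG U))"
    using fn_syl[OF fn] unfolding sylow_in_def AutF_def order_def by simp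
  obtain \<beta> where \<beta>: "\<beta> \<in> carrier (AG U)"
    and bK: "\<forall>g\<in>carrier (G\<lparr>carrier := NV\<rparr>). \<beta> \<otimes>\<^bsub>AG U\<^esub> l g \<otimes>\<^bsub>AG U\<^esub> inv\<^bsub>AG U\<^esub> \<beta> \<in> AutS G U"
    using sylow_conj[OF AG_group[OF U] _ AutS_sub[OF U] sy prm H(1) H(2) i, of l] F_finite[OF U] l_in l_hom
    by auto
  have b: "\<beta> \<in> F U U" using \<beta> by simp
  define \<psi> where "\<psi> = (\<lambda>v\<in>V. \<beta> (\<chi> v))"
  have psi1: "\<psi> \<in> F V U" unfolding \<psi>_def using F_comp[OF chi1 b] .
  have psiimg: "\<psi> ` V = U"
  proof -
    have "\<psi> ` V = \<beta> ` (\<chi> ` V)" unfolding \<psi>_def by (auto simp: image_iff)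
    thus ?thesis using img aut_surj[OF b] by simp
  qed
  have psi: "\<psi> \<in> F V (carrier G)" using F_widen[OF psi1 G.subgroup_self] psiimg Us by simp
  obtain \<alpha> where \<alpha>: "\<alpha> \<in> F (N_phi G V \<psi>) (carrier G)" and ag: "\<forall>x\<in>V. \<alpha> x = \<psi> x"
    using ext_ax[OF V psi] fn_fc[OF fn] psiimg by auto
  have "N_phi G V \<psi> = NV"
  proof
    show "N_phi G V \<psi> \<subseteq> NV" unfolding N_phi_def NV_def by auto
    show "NV \<subseteq> N_phi G V \<psi>"
    proof
      fix g assume g: "g \<in> NV"
      have gc: "g \<in> carrier G" using G.normalizer_carrier[OF Vs] g unfolding NV_def by blast
      have "\<beta> \<otimes>\<^bsub>AG U\<^esub> l g \<otimes>\<^bsub>AG U\<^esub> inv\<^bsub>AG U\<^esub> \<beta> \<in> AutS G U" using bK g by simp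
      then obtain h where h: "h \<in> normalizer G U"
        and hq: "\<beta> \<otimes>\<^bsub>AG U\<^esub> l g \<otimes>\<^bsub>AG U\<^esub> inv\<^bsub>AG U\<^esub> \<beta> = conjmap G h U"
        unfolding AutS_def by auto
      have "\<psi> (g \<otimes> y \<otimes> inv g) = h \<otimes> \<psi> y \<otimes> inv h" if y: "y \<in> V" for y
      proof -
        have gy: "g \<otimes> y \<otimes> inv g \<in> V" using G.normalizer_conj[OF Vs _ y] g unfolding NV_def by blast
        have cy: "\<chi> y \<in> U" using F_val[OF chi1 y] .
        have py: "\<psi> y = \<beta> (\<chi> y)" unfolding \<psi>_def using y by simp
        have pyU: "\<psi> y \<in> U" using F_val[OF psi1 y] .
        have ib: "(inv\<^bsub>AG U\<^esub> \<beta>) (\<beta> (\<chi> y)) = \<chi> y" using AG_inv_app[OF U b cy] .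
        have lgy: "l g (\<chi> y) = \<chi> (g \<otimes> y \<otimes> inv g)"
          using l_app[OF cy] cichi[OF y] by simp
        have A: "(\<beta> \<otimes>\<^bsub>AG U\<^esub> l g \<otimes>\<^bsub>AG U\<^esub> inv\<^bsub>AG U\<^esub> \<beta>) (\<psi> y) = \<beta> (\<chi> (g \<otimes> y \<otimes> inv g))"
          using pyU py ib cy lgy by simp
        have B: "(\<beta> \<otimes>\<^bsub>AG U\<^esub> l g \<otimes>\<^bsub>AG U\<^esub> inv\<^bsub>AG U\<^esub> \<beta>) (\<psi> y) = conjmap G h U (\<psi> y)"
          using hq by (rule fun_cong)
        have C: "conjmap G h U (\<psi> y) = h \<otimes> \<psi> y \<otimes> inv h"
          using pyU by (simp add: conjmap_def)
        have D: "\<psi> (g \<otimes> y \<otimes> inv g) = \<beta> (\<chi> (g \<otimes> y \<otimes> inv g))"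
          unfolding \<psi>_def using gy by simp
        show ?thesis using A B C D by metis
      qed
      moreover have "h \<in> normalizer G (\<psi> ` V)" using h psiimg by simp
      ultimately show "g \<in> N_phi G V \<psi>" unfolding N_phi_def using g unfolding NV_def by blast
    qed
  qed
  hence a2: "\<alpha> \<in> F (normalizer G V) (carrier G)" using \<alpha> unfolding NV_def by simp
  have "\<alpha> ` V = \<psi> ` V" using ag by (auto simp: image_iff)
  thus ?thesis using a2 psiimg by blast
qed

end

lemma (in group) cancel_left_inv: "x \<in> carrier G \<Longrightarrow> z \<in> carrier G \<Longrightarrow> x \<otimes> (inv x \<otimes> z) = z"
  by (simp add: m_assoc[symmetric])

lemma (in group) comm_conj:
  assumes c: "x \<in> carrier G" "d \<in> carrier G" "r \<in> carrier G"
    and h: "d \<otimes> (inv x \<otimes> r \<otimes> x) = (inv x \<otimes> r \<otimes> x) \<otimes> d"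
  shows "(x \<otimes> d \<otimes> inv x) \<otimes> r = r \<otimes> (x \<otimes> d \<otimes> inv x)"
proof -
  have "(x \<otimes> d \<otimes> inv x) \<otimes> r = x \<otimes> (d \<otimes> (inv x \<otimes> r \<otimes> x)) \<otimes> inv x"
    using c by (simp add: m_assoc)
  also have "\<dots> = x \<otimes> ((inv x \<otimes> r \<otimes> x) \<otimes> d) \<otimes> inv x" using h by simp
  also have "\<dots> = x \<otimes> (inv x \<otimes> (r \<otimes> (x \<otimes> d \<otimes> inv x)))"
    using c by (simp add: m_assoc)
  also have "\<dots> = r \<otimes> (x \<otimes> d \<otimes> inv x)" using c by (simp add: cancel_left_inv)
  finally show ?thesis .
qed

context satfs
begin

lemma conj_trans:
  assumes "R \<in> F_conjugates G F Q" "R' \<in> F_conjugates G F R"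
  shows "R' \<in> F_conjugates G F Q"
proof -
  obtain \<phi> where \<phi>: "\<phi> \<in> F Q (carrier G)" "R = \<phi> ` Q" using assms(1) unfolding F_conjugates_def by auto
  obtain \<psi> where \<psi>: "\<psi> \<in> F R (carrier G)" "R' = \<psi> ` R" using assms(2) unfolding F_conjugates_def by auto
  have "(\<lambda>x\<in>Q. \<psi> (\<phi> x)) \<in> F Q (carrier G)" using F_comp[OF F_fact1[OF \<phi>(1)]] \<phi>(2) \<psi>(1) by simp
  moreover have "(\<lambda>x\<in>Q. \<psi> (\<phi> x)) ` Q = R'" using \<phi>(2) \<psi>(2) by (auto simp: image_iff)
  ultimately show ?thesis unfolding F_conjugates_def by blast
qed

lemma conj_sym:
  assumes "R \<in> F_conjugates G F Q"
  shows "Q \<in> F_conjugates G F R"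
proof -
  obtain \<phi> where \<phi>: "\<phi> \<in> F Q (carrier G)" "R = \<phi> ` Q" using assms(1) unfolding F_conjugates_def by auto
  show ?thesis using F_inverse(1,2)[OF \<phi>(1)] \<phi>(2) unfolding F_conjugates_def by blast
qed

lemma main:
  assumes P: "subgroup P G"
    and nQ: "normal Q (G\<lparr>carrier := P\<rparr>)"
    and fnP: "fully_normalized G F P"
    and hyp: "\<And>\<xi>. \<xi> \<in> AutF F P \<Longrightarrow> centralizer G (\<xi> ` Q) \<subseteq> P"
  shows "fully_centralized G F Q"
proof -
  have Ps: "P \<subseteq> carrier G" using subgroup.subset[OF P] .
  have GP: "group (G\<lparr>carrier := P\<rparr>)" using G.subgroup_imp_group[OF P] .
  have nQ': "subgroup Q (G\<lparr>carrier := P\<rparr>) \<and> (\<forall>x\<in>carrier (G\<lparr>carrier := P\<rparr>). \<forall>h\<in>Q.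
      x \<otimes>\<^bsub>G\<lparr>carrier := P\<rparr>\<^esub> h \<otimes>\<^bsub>G\<lparr>carrier := P\<rparr>\<^esub> inv\<^bsub>G\<lparr>carrier := P\<rparr>\<^esub> x \<in> Q)"
    using group.normal_inv_iff[OF GP] nQ by blast
  have Q: "subgroup Q G" using G.incl_subgroup[OF P] nQ' by blast
  have QP: "Q \<subseteq> P" using subgroup.subset[of Q "G\<lparr>carrier := P\<rparr>"] nQ' by auto
  have Qs: "Q \<subseteq> carrier G" using QP Ps by blast
  have finQ: "finite Q" using fin Qs finite_subset by blast
  have nconj: "x \<otimes> q \<otimes> inv x \<in> Q" if x: "x \<in> P" and q: "q \<in> Q" for x q
  proof -
    have "x \<otimes>\<^bsub>G\<lparr>carrier := P\<rparr>\<^esub> q \<otimes>\<^bsub>G\<lparr>carrier := P\<rparr>\<^esub> inv\<^bsub>G\<lparr>carrier := P\<rparr>\<^esub> x \<in> Q"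
      using nQ' x q by simp
    thus ?thesis using G.m_inv_consistent[OF P x] by simp
  qed
  have PN: "P \<subseteq> normalizer G Q"
  proof
    fix x assume x: "x \<in> P"
    show "x \<in> normalizer G Q" using G.normalizer_intro[OF finQ Qs] Ps x nconj by blast
  qed
  define NQ where "NQ = normalizer G Q"
  have NQs: "subgroup NQ G" unfolding NQ_def using G.normalizer_imp_subgroup[OF Qs] .
  define Cq where "Cq = F_conjugates G F Q"
  have finCq: "finite Cq"
  proof -
    have "Cq \<subseteq> Pow (carrier G)" unfolding Cq_def F_conjugates_def using F_img by blast
    thus ?thesis using fin finite_subset by blast
  qed
  have QCq: "Q \<in> Cq"
  proof -
    have "(\<lambda>x\<in>Q. x) \<in> F Q (carrier G)" using F_incl[OF Q G.subgroup_self Qs] .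
    moreover have "(\<lambda>x\<in>Q. x) ` Q = Q" by auto
    ultimately show ?thesis unfolding Cq_def F_conjugates_def by blast
  qed
  define m where "m = Max ((\<lambda>R. card (normalizer G R)) ` Cq)"
  have "m \<in> (\<lambda>R. card (normalizer G R)) ` Cq" unfolding m_def using finCq QCq by (intro Max_in) auto
  then obtain R where R: "R \<in> Cq" "card (normalizer G R) = m" by auto
  have Rmax: "card (normalizer G R') \<le> card (normalizer G R)" if "R' \<in> Cq" for R'
    unfolding R(2) m_def using finCq that by (intro Max_ge) auto
  obtain \<chi> where chi: "\<chi> \<in> F Q (carrier G)" "R = \<chi> ` Q" using R(1) unfolding Cq_def F_conjugates_def by auto
  have fnR: "fully_normalized G F R"
    unfolding fully_normalized_def
  proof
    show "subgroup R G" using F_img_sg[OF chi(1)] chi(2) by simp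
    show "\<forall>R'\<in>F_conjugates G F R. card (normalizer G R') \<le> card (normalizer G R)"
      using Rmax conj_trans R(1) unfolding Cq_def by blast
  qed
  have fcR: "fully_centralized G F R" using fn_fc[OF fnR] .
  obtain \<alpha> where \<alpha>: "\<alpha> \<in> F NQ (carrier G)" and aQ: "\<alpha> ` Q = R"
    using key[OF fnR chi(1) chi(2)[symmetric]] unfolding NQ_def by blast
  have PNQ: "P \<subseteq> NQ" using PN unfolding NQ_def .
  have QNQ: "Q \<subseteq> NQ" using QP PNQ by blast
  define P' where "P' = \<alpha> ` P"
  have aP: "restrict \<alpha> P \<in> F P (carrier G)" using F_restr[OF \<alpha> P PNQ] .
  have aPimg: "restrict \<alpha> P ` P = P'" unfolding P'_def by auto
  have P': "subgroup P' G" using F_img_sg[OF aP] aPimg by simp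
  have P's: "P' \<subseteq> carrier G" using subgroup.subset[OF P'] .
  define \<chi>2 where "\<chi>2 = (\<lambda>y\<in>restrict \<alpha> P ` P. the_inv_into P (restrict \<alpha> P) y)"
  have chi2: "\<chi>2 \<in> F P' (carrier G)" "\<chi>2 ` P' = P"
    using F_inverse(1,2)[OF aP] aPimg unfolding \<chi>2_def by auto
  obtain \<beta> where \<beta>: "\<beta> \<in> F (normalizer G P') (carrier G)" and bP: "\<beta> ` P' = P"
    using key[OF fnP chi2] by blast
  define NP where "NP = normalizer G P'"
  have P'NP: "P' \<subseteq> NP" unfolding NP_def using G.subgroup_in_normalizer[OF P'] by blast
  have RP': "R \<subseteq> P'" unfolding P'_def using aQ QP by blast
  have Rs: "R \<subseteq> carrier G" using RP' P's by blast
  have RNP: "R \<subseteq> NP" using RP' P'NP by blast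
  have ac: "\<And>a. a \<in> NQ \<Longrightarrow> a \<in> carrier G" using sgc[OF NQs] .
  have normR: "x \<otimes> r \<otimes> inv x \<in> R" if x: "x \<in> P'" and r: "r \<in> R" for x r
  proof -
    obtain a where a: "a \<in> P" "x = \<alpha> a" using x unfolding P'_def by auto
    obtain q where q: "q \<in> Q" "r = \<alpha> q" using r aQ by auto
    have aN: "a \<in> NQ" using a PNQ by blast
    have qN: "q \<in> NQ" using q QNQ by blast
    have iaN: "inv a \<in> NQ" using subgroup.m_inv_closed[OF NQs aN] .
    have aqN: "a \<otimes> q \<in> NQ" using subgroup.m_closed[OF NQs aN qN] .
    have "\<alpha> (a \<otimes> q \<otimes> inv a) = \<alpha> a \<otimes> \<alpha> q \<otimes> inv (\<alpha> a)"
      using F_hom[OF \<alpha> aqN iaN] F_hom[OF \<alpha> aN qN] F_inv[OF \<alpha> aN] by simp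
    moreover have "a \<otimes> q \<otimes> inv a \<in> Q" using nconj[OF a(1) q(1)] .
    ultimately show ?thesis using a q aQ by (metis image_eqI)
  qed
  define \<xi> where "\<xi> = (\<lambda>x\<in>P. \<beta> (\<alpha> x))"
  have xi: "\<xi> \<in> AutF F P"
  proof -
    have a1: "restrict \<alpha> P \<in> F P P'" using F_fact1[OF aP] aPimg by simp
    have b0: "restrict \<beta> P' \<in> F P' (carrier G)" using F_restr[OF \<beta> P'] P'NP unfolding NP_def by blast
    have "restrict \<beta> P' ` P' = P" using bP by auto
    hence b1: "restrict \<beta> P' \<in> F P' P" using F_fact1[OF b0] by simp
    have "(\<lambda>x\<in>P. restrict \<beta> P' (restrict \<alpha> P x)) \<in> F P P" using F_comp[OF a1 b1] .
    moreover have "(\<lambda>x\<in>P. restrict \<beta> P' (restrict \<alpha> P x)) = \<xi>"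
      unfolding \<xi>_def P'_def by (auto simp: fun_eq_iff)
    ultimately show ?thesis unfolding AutF_def by simp
  qed
  have xiQ: "\<xi> ` Q = \<beta> ` R"
  proof -
    have "\<xi> ` Q = \<beta> ` (\<alpha> ` Q)" unfolding \<xi>_def using QP by (auto simp: image_iff)
    thus ?thesis using aQ by simp
  qed
  have hypC: "centralizer G (\<beta> ` R) \<subseteq> P" using hyp[OF xi] xiQ by simp
  define D where "D = centralizer G R"
  have Dsg: "subgroup D G" unfolding D_def using G.centralizer_subgroup[OF Rs] .
  obtain n where n: "card (carrier G) = p ^ n" using ordp by blast
  have DP': "D \<subseteq> P'"
  proof (rule coset_trick[OF grp fin n prm P' Dsg])
    fix x d assume x: "x \<in> P'" and d: "d \<in> D"
    have xc: "x \<in> carrier G" using x P's by blast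
    have dc: "d \<in> carrier G" and dcom: "\<And>r. r \<in> R \<Longrightarrow> d \<otimes> r = r \<otimes> d" using d unfolding D_def centralizer_def by auto
    have ix: "inv x \<in> P'" using subgroup.m_inv_closed[OF P' x] .
    have "(x \<otimes> d \<otimes> inv x) \<otimes> r = r \<otimes> (x \<otimes> d \<otimes> inv x)" if r: "r \<in> R" for r
    proof -
      have "inv x \<otimes> r \<otimes> inv (inv x) \<in> R" using normR[OF ix r] .
      hence r': "inv x \<otimes> r \<otimes> x \<in> R" using xc by simp
      show ?thesis using G.comm_conj[OF xc dc] Rs r dcom[OF r'] by blast
    qed
    thus "x \<otimes> d \<otimes> inv x \<in> D" unfolding D_def centralizer_def using xc dc by auto
  next
    fix d assume d: "d \<in> D" and dN: "d \<in> normalizer G P'"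
    have dc: "d \<in> carrier G" and dcom: "\<And>r. r \<in> R \<Longrightarrow> d \<otimes> r = r \<otimes> d" using d unfolding D_def centralizer_def by auto
    have "\<beta> d \<in> centralizer G (\<beta> ` R)"
      unfolding centralizer_def
    proof (intro CollectI conjI ballI)
      show "\<beta> d \<in> carrier G" using F_valc[OF \<beta> dN] .
      fix z assume "z \<in> \<beta> ` R"
      then obtain r where r: "r \<in> R" "z = \<beta> r" by auto
      have rN: "r \<in> normalizer G P'" using RNP r unfolding NP_def by blast
      show "\<beta> d \<otimes> z = z \<otimes> \<beta> d"
        using F_hom[OF \<beta> dN rN] F_hom[OF \<beta> rN dN] dcom[OF r(1)] r(2) by simp
    qed
    hence "\<beta> d \<in> \<beta> ` P'" using hypC bP by blast
    then obtain x where x: "x \<in> P'" "\<beta> d = \<beta> x" by auto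
    have xN: "x \<in> normalizer G P'" using x P'NP unfolding NP_def by blast
    have "d = x" using inj_onD[OF F_inj[OF \<beta>] x(2) dN xN] .
    thus "d \<in> P'" using x by simp
  qed
  have DCQ: "D \<subseteq> \<alpha> ` centralizer G Q"
  proof
    fix c assume c: "c \<in> D"
    have cc: "c \<in> carrier G" and ccom: "\<And>r. r \<in> R \<Longrightarrow> c \<otimes> r = r \<otimes> c" using c unfolding D_def centralizer_def by auto
    obtain x where x: "x \<in> P" "c = \<alpha> x" using DP' c unfolding P'_def by auto
    have xN: "x \<in> NQ" using x PNQ by blast
    have "x \<otimes> q = q \<otimes> x" if q: "q \<in> Q" for q
    proof -
      have qN: "q \<in> NQ" using q QNQ by blast
      have "\<alpha> q \<in> R" using aQ q by blast
      hence "\<alpha> (x \<otimes> q) = \<alpha> (q \<otimes> x)"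
        using F_hom[OF \<alpha> xN qN] F_hom[OF \<alpha> qN xN] ccom x(2) by simp
      thus ?thesis using inj_onD[OF F_inj[OF \<alpha>]] subgroup.m_closed[OF NQs xN qN] subgroup.m_closed[OF NQs qN xN]
        by blast
    qed
    hence "x \<in> centralizer G Q" unfolding centralizer_def using ac[OF xN] by auto
    thus "c \<in> \<alpha> ` centralizer G Q" using x by blast
  qed
  have finC: "finite (centralizer G Q)" using fin unfolding centralizer_def by auto
  have "card D \<le> card (\<alpha> ` centralizer G Q)" using card_mono[OF finite_imageI[OF finC] DCQ] .
  also have "\<dots> \<le> card (centralizer G Q)" using card_image_le[OF finC] .
  finally have cRQ: "card (centralizer G R) \<le> card (centralizer G Q)" unfolding D_def .
  show ?thesis
    unfolding fully_centralized_def
  proof (intro conjI ballI)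
    show "subgroup Q G" by (rule Q)
    fix R' assume R': "R' \<in> F_conjugates G F Q"
    have "R' \<in> F_conjugates G F R" using conj_trans[OF conj_sym[OF R(1)[unfolded Cq_def]] R'] .
    hence "card (centralizer G R') \<le> card (centralizer G R)" using fcR unfolding fully_centralized_def by blast
    thus "card (centralizer G R') \<le> card (centralizer G Q)" using cRQ by simp
  qed
qed

end

theorem lemma2p5:
  fixes G :: "('a, 'b) monoid_scheme" and F :: "'a set \<Rightarrow> 'a set \<Rightarrow> ('a \<Rightarrow> 'a) set"
    and p :: nat and P Q :: "'a set"
  assumes "saturated p G F"
    and "subgroup P G"
    and "normal Q (G\<lparr>carrier := P\<rparr>)"
    and "fully_normalized G F P"
    and "\<And>\<xi>. \<xi> \<in> AutF F P \<Longrightarrow> centralizer G (\<xi> ` Q) \<subseteq> P"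
  shows "fully_centralized G F Q"
  using satfs.main[OF satfs.intro[OF assms(1)] assms(2) assms(3) assms(4) assms(5)] .

end
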